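(* Let $s\in(0,d]$ and $\theta\in(0,1)$. If $X\subseteq\mathbb{R}^d$ is bounded, then \[ \overline{\dim}_{\mathrm{B}}^{s}X\ \geq\ \overline{\dim}_{\mathrm{B}}X-\max\big\{0,\ \overline{\dim}_{\mathrm{A}}^\theta X-s,\ (\dim_{\mathrm{A}}X-s)(1-\theta)\big\}. \]
   Context: For non-empty bounded $E\subseteq\mathbb{R}^d$ and $r>0$, $N_r(E)$ is the minimal number of sets of diameter $r$ needed to cover $E$, and $\overline{\dim}_{\mathrm{B}}E=\limsup_{r\to0}\frac{\log N_r(E)}{-\log r}$. The Assouad dimension $\dim_{\mathrm{A}}X$ is the infimum of $\alpha>0$ for which there is $C>0$ with $N_r(B(x,R)\cap X)\leq C(R/r)^\alpha$ for all $0<r<R$ and $x\in X$; the upper Assouad spectrum $\overline{\dim}_{\mathrm{A}}^{\theta}X$ is the infimum of $\alpha$ for which there is $C>0$ with $N_r(B(x,R)\cap X)\leq C(R/r)^\alpha$ for all $0<r\leq R^{1/\theta}<R<1$ and $x\in X$. Box dimension profiles: for $s\in[0,d]$ and $r>0$ let $\phi_r^s(x)=\min\{1,(r/|x|)^s\}$ for $x\in\mathbb{R}^d$. For non-empty compact $X$, the capacity $C_r^s(X)$ is defined by $1/C_r^s(X)=\inf_{\mu}\iint\phi_r^s(x-y)\,d\mu(x)\,d\mu(y)$, the infimum over Borel probability measures $\mu$ supported on $X$; for bounded $X$ the capacity is that of its closure. The upper box dimension profile is $\overline{\dim}_{\mathrm{B}}^sX=\limsup_{r\to0}\frac{\log C_r^s(X)}{-\log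 r}$. *)

theory Defs
  imports "HOL-Analysis.Analysis" "HOL-Probability.Probability"
begin

definition covnum :: "real \<Rightarrow> ('a::metric_space) set \<Rightarrow> nat" where
  "covnum r E = (LEAST n. \<exists>C. finite C \<and> card C = n \<and> E \<subseteq> \<Union>C \<and> (\<forall>A\<in>C. diameter A \<le> r))"

definition upper_box_dim :: "('a::metric_space) set \<Rightarrow> ereal" where
  "upper_box_dim E = Limsup (at_right 0) (\<lambda>r. ereal (ln (real (covnum r E)) / - ln r))"

definition assouad_dim :: "('a::metric_space) set \<Rightarrow> ereal" where
  "assouad_dim X = Inf (ereal ` {\<alpha>. \<alpha> > 0 \<and> (\<exists>C>0. \<forall>x\<in>X. \<forall>r R. 0 < r \<and> r < R \<longrightarrow>
      real (covnum r (ball x R \<inter> X)) \<le> C * (R / r) powr \<alpha>)})"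

definition upper_assouad_spectrum :: "real \<Rightarrow> ('a::metric_space) set \<Rightarrow> ereal" where
  "upper_assouad_spectrum \<theta> X = Inf (ereal ` {\<alpha>. \<alpha> > 0 \<and> (\<exists>C>0. \<forall>x\<in>X. \<forall>r R.
      0 < r \<and> r \<le> R powr (1 / \<theta>) \<and> R powr (1 / \<theta>) < R \<and> R < 1 \<longrightarrow>
      real (covnum r (ball x R \<inter> X)) \<le> C * (R / r) powr \<alpha>)})"

definition phi_kernel :: "real \<Rightarrow> real \<Rightarrow> ('a::real_normed_vector) \<Rightarrow> real" where
  "phi_kernel s r x = (if x = 0 then 1 else min 1 ((r / norm x) powr s))"

definition min_energy :: "real \<Rightarrow> real \<Rightarrow> ('a::euclidean_space) set \<Rightarrow> ennreal" where
  "min_energy s r X = Inf {(\<integral>\<^sup>+ x. (\<integral>\<^sup>+ y. ennreal (phi_kernel s r (x - y)) \<partial>\<mu>) \<partial>\<mu>) | \<mu>.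
      sets \<mu> = sets borel \<and> prob_space \<mu> \<and> emeasure \<mu> (UNIV - closure X) = 0}"

definition capacity :: "real \<Rightarrow> real \<Rightarrow> ('a::euclidean_space) set \<Rightarrow> real" where
  "capacity s r X = 1 / enn2real (min_energy s r X)"

definition upper_box_dim_profile :: "real \<Rightarrow> ('a::euclidean_space) set \<Rightarrow> ereal" where
  "upper_box_dim_profile s X = Limsup (at_right 0) (\<lambda>r. ereal (ln (capacity s r X) / - ln r))"

end

theory Submission
  imports Defs
begin


lemma sup_unbounded_eq:
  fixes A B :: "real set"
  assumes "\<not> bdd_above A" "\<not> bdd_above B"
  shows "Sup A = Sup B"
proof -
  have a: "\<not>(\<forall>x\<in>A. x \<le> z)" for z using assms(1) by (auto simp: bdd_above_def)
  have b: "\<not>(\<forall>x\<in>B. x \<le> z)" for z using assms(2) by (auto simp: bdd_above_def)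
  have "(\<lambda>z. \<forall>x\<in>A. x \<le> z) = (\<lambda>z. \<forall>x\<in>B. x \<le> z)" proof (rule ext)
    fix z show "(\<forall>x\<in>A. x \<le> z) = (\<forall>x\<in>B. x \<le> z)" using a[of z] b[of z] by blast
  qed
  then show ?thesis by (simp add: Sup_real_def)
qed

lemma unbounded_dists:
  fixes A :: "'a::metric_space set"
  assumes "\<not> bounded A"
  shows "\<not> bdd_above ((\<lambda>(x,y). dist x y) ` (A \<times> A))"
proof
  assume "bdd_above ((\<lambda>(x,y). dist x y) ` (A \<times> A))"
  then obtain M where M: "\<And>x y. x \<in> A \<Longrightarrow> y \<in> A \<Longrightarrow> dist x y \<le> M"
    by (auto simp: bdd_above_def)
  have "A \<noteq> {}" using assms by auto
  then obtain a where "a \<in> A" by auto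
  then have "bounded A" unfolding bounded_def using M by blast
  then show False using assms by simp
qed

lemma diameter_unbounded:
  fixes A :: "'a::euclidean_space set"
  assumes "\<not> bounded A"
  shows "diameter A = diameter (UNIV::'a set)"
proof -
  have "A \<noteq> {}" using assms by auto
  then show ?thesis unfolding diameter_def
    using sup_unbounded_eq[OF unbounded_dists[OF assms] unbounded_dists[OF not_bounded_UNIV]]
    by simp
qed

lemma covnum_le:
  assumes "finite C" "E \<subseteq> \<Union>C" "\<forall>A\<in>C. diameter A \<le> r"
  shows "covnum r E \<le> card C"
  unfolding covnum_def by (rule Least_le) (use assms in blast)

lemma covnum_ex:
  assumes "finite C" "E \<subseteq> \<Union>C" "\<forall>A\<in>C. diameter A \<le> r"
  shows "\<exists>C. finite C \<and> card C = covnum r E \<and> E \<subseteq> \<Union>C \<and> (\<forall>A\<in>C. diameter A \<le> r)"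
  unfolding covnum_def by (rule LeastI_ex) (use assms in blast)

lemma sep_card_bound:
  fixes S :: "'a::euclidean_space set"
  assumes "finite S" "S \<subseteq> cball c \<rho>" "d > 0" "\<rho> \<ge> 0"
    and sep: "\<And>x y. x \<in> S \<Longrightarrow> y \<in> S \<Longrightarrow> x \<noteq> y \<Longrightarrow> d < dist x y"
  shows "real (card S) * (d/2)^DIM('a) \<le> (\<rho> + d/2)^DIM('a)"
proof -
  let ?V = "unit_ball_vol (real DIM('a))"
  have dj: "disjoint_family_on (\<lambda>x. ball x (d/2)) S"
    unfolding disjoint_family_on_def
  proof (intro ballI impI)
    fix x y assume xy: "x \<in> S" "y \<in> S" "x \<noteq> y"
    show "ball x (d/2) \<inter> ball y (d/2) = {}"
    proof (rule ccontr)
      assume "ball x (d/2) \<inter> ball y (d/2) \<noteq> {}"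
      then obtain z where "dist x z < d/2" "dist y z < d/2" by auto
      then have "dist x y < d" by (metis dist_commute dist_triangle_half_r)
      then show False using sep[OF xy] by simp
    qed
  qed
  have "(\<Sum>x\<in>S. emeasure lborel (ball x (d/2))) = emeasure lborel (\<Union>x\<in>S. ball x (d/2))"
    by (rule sum_emeasure) (use dj assms in auto)
  also have "\<dots> \<le> emeasure lborel (ball c (\<rho> + d/2))"
  proof (rule emeasure_mono)
    show "(\<Union>x\<in>S. ball x (d / 2)) \<subseteq> ball c (\<rho> + d / 2)"
    proof
      fix z assume "z \<in> (\<Union>x\<in>S. ball x (d / 2))"
      then obtain x where "x \<in> S" "dist x z < d/2" by auto
      moreover have "dist c x \<le> \<rho>" using assms(2) \<open>x\<in>S\<close> by auto
      ultimately show "z \<in> ball c (\<rho> + d / 2)" using dist_triangle[of c z x] by auto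
    qed
  qed auto
  finally have "(\<Sum>x\<in>S. ennreal (?V * (d/2)^DIM('a))) \<le> ennreal (?V * (\<rho> + d/2)^DIM('a))"
    using assms by (simp add: emeasure_ball)
  then have "ennreal (real (card S) * (?V * (d/2)^DIM('a))) \<le> ennreal (?V * (\<rho> + d/2)^DIM('a))"
    using assms by (simp add: ennreal_mult ennreal_of_nat_eq_real_of_nat)
  then have "real (card S) * (?V * (d/2)^DIM('a)) \<le> ?V * (\<rho> + d/2)^DIM('a)"
    using assms by (subst (asm) ennreal_le_iff) auto
  then have "?V * (real (card S) * (d/2)^DIM('a)) \<le> ?V * (\<rho> + d/2)^DIM('a)"
    by (simp add: algebra_simps)
  then show ?thesis by (subst (asm) mult_le_cancel_left_pos) auto
qed

definition sep :: "real \<Rightarrow> 'a::metric_space set \<Rightarrow> bool" where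
  "sep d S \<longleftrightarrow> (\<forall>x\<in>S. \<forall>y\<in>S. x \<noteq> y \<longrightarrow> d < dist x y)"

lemma max_sep:
  fixes E :: "'a::euclidean_space set"
  assumes "bounded E" "d > 0"
  obtains S where "S \<subseteq> E" "finite S" "sep d S" "\<And>x. x \<in> E \<Longrightarrow> \<exists>y\<in>S. dist x y \<le> d"
proof -
  obtain \<rho> c where Ec: "E \<subseteq> cball c \<rho>" "0 \<le> \<rho>" using assms(1) bounded_subset_cball by blast
  define P where "P T \<longleftrightarrow> T \<subseteq> E \<and> finite T \<and> sep d T" for T
  define b where "b = nat \<lfloor>(\<rho> + d/2)^DIM('a) / (d/2)^DIM('a)\<rfloor> + 1"
  have bnd: "card T < b" if "P T" for T
  proof -
    have "real (card T) * (d/2)^DIM('a) \<le> (\<rho> + d/2)^DIM('a)"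
      by (rule sep_card_bound[where c=c]) (use that Ec assms in \<open>auto simp: P_def sep_def\<close>)
    then have "real (card T) \<le> (\<rho> + d/2)^DIM('a) / (d/2)^DIM('a)"
      using assms by (simp add: field_simps)
    then show ?thesis unfolding b_def by linarith
  qed
  have "P {}" by (simp add: P_def sep_def)
  then obtain S where S: "P S" "\<And>T. P T \<Longrightarrow> card T \<le> card S"
    using ex_has_greatest_nat[of P "{}" card b] bnd by blast
  show ?thesis
  proof (rule that)
    show "S \<subseteq> E" "finite S" "sep d S" using S(1) by (auto simp: P_def)
    fix x assume x: "x \<in> E"
    show "\<exists>y\<in>S. dist x y \<le> d"
    proof (rule ccontr)
      assume "\<not> ?thesis"
      then have far: "\<forall>y\<in>S. d < dist x y" by auto
      then have "x \<notin> S" using assms by auto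
      have "P (insert x S)" using S(1) x far unfolding P_def sep_def
        by (auto simp: dist_commute)
      then have "card (insert x S) \<le> card S" by (rule S(2))
      then show False using \<open>x \<notin> S\<close> S(1) by (simp add: P_def)
    qed
  qed
qed



lemma card_le_covnum:
  fixes E :: "'a::euclidean_space set"
  assumes "bounded E" "0 < d" "d < diameter (UNIV::'a set)" "T \<subseteq> E" "finite T" "sep d T"
  shows "card T \<le> covnum d E"
proof -
  obtain S where S: "S \<subseteq> E" "finite S" "\<And>x. x \<in> E \<Longrightarrow> \<exists>y\<in>S. dist x y \<le> d/2"
  proof -
    have "d/2 > 0" using assms(2) by simp
    from max_sep[OF assms(1) this] show ?thesis using that by metis
  qed
  let ?C = "(\<lambda>p. cball p (d/2)) ` S"
  have cov: "finite ?C" "E \<subseteq> \<Union>?C" "\<forall>A\<in>?C. diameter A \<le> d"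
    using S assms(2) by (auto simp: dist_commute)
  from covnum_ex[OF cov] obtain C where C: "finite C" "card C = covnum d E" "E \<subseteq> \<Union>C" "\<forall>A\<in>C. diameter A \<le> d"
    by blast
  have "\<forall>x\<in>T. \<exists>A. A \<in> C \<and> x \<in> A" using C(3) assms(4) by blast
  from bchoice[OF this] obtain f where f0: "\<forall>x\<in>T. f x \<in> C \<and> x \<in> f x" by blast
  then have f: "\<And>x. x \<in> T \<Longrightarrow> f x \<in> C \<and> x \<in> f x" by blast
  have "inj_on f T"
  proof (rule inj_onI)
    fix x y assume xy: "x \<in> T" "y \<in> T" "f x = f y"
    let ?A = "f x"
    have A: "?A \<in> C" "x \<in> ?A" "y \<in> ?A" using f xy by auto
    have "bounded ?A"
    proof (rule ccontr)
      assume "\<not> bounded ?A"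
      then have "diameter ?A = diameter (UNIV::'a set)" by (rule diameter_unbounded)
      moreover have "diameter ?A \<le> d" using C(4) A(1) by blast
      ultimately show False using assms(3) by linarith
    qed
    then have "dist x y \<le> diameter ?A" using diameter_bounded_bound[OF _ A(2,3)] by blast
    moreover have "diameter ?A \<le> d" using C(4) A(1) by blast
    ultimately have "\<not> d < dist x y" by linarith
    then show "x = y" using assms(6) xy(1,2) unfolding sep_def by blast
  qed
  moreover have "f ` T \<subseteq> C" using f by auto
  ultimately have "card T \<le> card C" using card_inj_on_le C(1) by blast
  then show ?thesis using C(2) by simp
qed

lemma covnum_le_sep:
  fixes E :: "'a::euclidean_space set"
  assumes "bounded E" "r > 0"
  obtains S where "S \<subseteq> E" "finite S" "sep (r/2) S" "\<And>x. x \<in> E \<Longrightarrow> \<exists>y\<in>S. dist x y \<le> r/2"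
    "covnum r E \<le> card S"
proof -
  have r2: "r/2 > 0" using assms(2) by simp
  obtain S where S: "S \<subseteq> E" "finite S" "sep (r/2) S" "\<And>x. x \<in> E \<Longrightarrow> \<exists>y\<in>S. dist x y \<le> r/2"
    by (rule max_sep[OF assms(1) r2]) blast
  let ?C = "(\<lambda>p. cball p (r/2)) ` S"
  have "finite ?C" "E \<subseteq> \<Union>?C" "\<forall>A\<in>?C. diameter A \<le> r"
    using S assms(2) by (auto simp: dist_commute)
  then have "covnum r E \<le> card ?C" by (rule covnum_le)
  also have "\<dots> \<le> card S" using S(2) card_image_le by blast
  finally show ?thesis using that S by blast
qed

lemma covnum_pos:
  fixes E :: "'a::euclidean_space set"
  assumes "bounded E" "r > 0" "E \<noteq> {}"
  shows "covnum r E > 0"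
proof -
  have r2: "r/2 > 0" using assms(2) by simp
  obtain S where S: "S \<subseteq> E" "finite S" "\<And>x. x \<in> E \<Longrightarrow> \<exists>y\<in>S. dist x y \<le> r/2"
    by (rule max_sep[OF assms(1) r2]) blast
  let ?C = "(\<lambda>p. cball p (r/2)) ` S"
  have cov: "finite ?C" "E \<subseteq> \<Union>?C" "\<forall>A\<in>?C. diameter A \<le> r"
    using S assms(2) by (auto simp: dist_commute)
  from covnum_ex[OF cov] obtain C where C: "finite C" "card C = covnum r E" "E \<subseteq> \<Union>C"
    by blast
  then have "C \<noteq> {}" using assms(3) by auto
  then show ?thesis using C by (metis card_gt_0_iff)
qed

lemma covnum_le_sep_ex:
  fixes E :: "'a::euclidean_space set"
  assumes "bounded E" "r > 0"
  shows "\<exists>S. S \<subseteq> E \<and> finite S \<and> sep (r/2) S \<and> covnum r E \<le> card S"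
  by (rule covnum_le_sep[OF assms]) blast

lemma covnum_ball_bound:
  fixes X :: "'a::euclidean_space set"
  assumes "0 < r" "r < R"
  shows "real (covnum r (ball x R \<inter> X)) \<le> 5^DIM('a) * (R/r) powr DIM('a)"
proof -
  have bE: "bounded (ball x R \<inter> X)" by (simp add: bounded_Int)
  obtain S where S: "S \<subseteq> ball x R \<inter> X" "finite S" "sep (r/2) S" "covnum r (ball x R \<inter> X) \<le> card S"
    using covnum_le_sep_ex[OF bE assms(1)] by blast
  have "real (card S) * (r/2/2)^DIM('a) \<le> (R + r/2/2)^DIM('a)"
    by (rule sep_card_bound[where c=x]) (use S assms in \<open>auto simp: sep_def\<close>)
  also have "\<dots> \<le> (5*R/4)^DIM('a)" using assms by (intro power_mono) auto
  finally have "real (card S) * (r/4)^DIM('a) \<le> (5*R/4)^DIM('a)" by simp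
  moreover have "(r/4)^DIM('a) > 0" using assms by simp
  ultimately have "real (card S) \<le> (5*R/4)^DIM('a) / (r/4)^DIM('a)" by (simp add: pos_le_divide_eq)
  also have "\<dots> = ((5*R/4) / (r/4))^DIM('a)" by (simp add: power_divide)
  also have "(5*R/4) / (r/4) = 5 * (R/r)" using assms by simp
  also have "(5 * (R/r))^DIM('a) = 5^DIM('a) * (R/r)^DIM('a)" by (rule power_mult_distrib)
  also have "\<dots> = 5^DIM('a) * (R/r) powr DIM('a)" using assms by (simp add: powr_realpow)
  finally show ?thesis using S(4) by linarith
qed

lemma assouad_fin:
  fixes X :: "'a::euclidean_space set"
  shows "assouad_dim X \<le> ereal DIM('a)" "assouad_dim X \<ge> 0"
proof -
  have "real DIM('a) \<in> {\<alpha>. \<alpha> > 0 \<and> (\<exists>C>0. \<forall>x\<in>X. \<forall>r R. 0 < r \<and> r < R \<longrightarrow>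
      real (covnum r (ball x R \<inter> X)) \<le> C * (R / r) powr \<alpha>)}"
    using covnum_ball_bound by (auto intro!: exI[of _ "5^DIM('a)"])
  then show "assouad_dim X \<le> ereal DIM('a)" unfolding assouad_dim_def by (intro Inf_lower) auto
  show "assouad_dim X \<ge> 0" unfolding assouad_dim_def by (intro Inf_greatest) auto
qed

lemma spec_fin:
  fixes X :: "'a::euclidean_space set"
  shows "upper_assouad_spectrum \<theta> X \<le> ereal DIM('a)" "upper_assouad_spectrum \<theta> X \<ge> 0"
proof -
  have "real DIM('a) \<in> {\<alpha>. \<alpha> > 0 \<and> (\<exists>C>0. \<forall>x\<in>X. \<forall>r R.
      0 < r \<and> r \<le> R powr (1 / \<theta>) \<and> R powr (1 / \<theta>) < R \<and> R < 1 \<longrightarrow>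
      real (covnum r (ball x R \<inter> X)) \<le> C * (R / r) powr \<alpha>)}"
    using covnum_ball_bound by (force intro!: exI[of _ "5^DIM('a)"])
  then show "upper_assouad_spectrum \<theta> X \<le> ereal DIM('a)" unfolding upper_assouad_spectrum_def by (intro Inf_lower) auto
  show "upper_assouad_spectrum \<theta> X \<ge> 0" unfolding upper_assouad_spectrum_def by (intro Inf_greatest) auto
qed



definition unifm :: "'a::euclidean_space set \<Rightarrow> 'a measure" where
  "unifm S = distr (measure_pmf (pmf_of_set S)) borel id"

lemma phi_nonneg: "0 \<le> phi_kernel s r z"
  by (simp add: phi_kernel_def)

lemma phi_le1: "phi_kernel s r z \<le> 1"
  by (simp add: phi_kernel_def)

lemma ennreal_sum_div:
  assumes "finite S" "S \<noteq> {}" "\<And>j. j \<in> S \<Longrightarrow> 0 \<le> (f j::real)"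
  shows "(\<Sum>j\<in>S. ennreal (f j)) / of_nat (card S) = ennreal ((\<Sum>j\<in>S. f j) / real (card S))"
proof -
  have "(\<Sum>j\<in>S. ennreal (f j)) = ennreal (\<Sum>j\<in>S. f j)" by (rule sum_ennreal) (use assms in auto)
  moreover have "(of_nat (card S) :: ennreal) = ennreal (real (card S))" by (simp add: ennreal_of_nat_eq_real_of_nat)
  moreover have "real (card S) > 0" using assms by (simp add: card_gt_0_iff)
  ultimately show ?thesis using assms by (simp add: divide_ennreal sum_nonneg)
qed

lemma phi_meas: "(\<lambda>z. phi_kernel s r (z::'a::euclidean_space)) \<in> borel_measurable borel"
  unfolding phi_kernel_def by measurable

lemma phi_meas2: "(\<lambda>y. ennreal (phi_kernel s r (x - (y::'a::euclidean_space)))) \<in> borel_measurable borel"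
proof -
  have "(\<lambda>y. phi_kernel s r (x - y)) \<in> borel_measurable borel"
    using measurable_compose[OF _ phi_meas, of "\<lambda>y. x - y" borel] by simp
  then show ?thesis by (rule measurable_compose[OF _ measurable_ennreal])
qed

lemma unifm_props:
  fixes S :: "'a::euclidean_space set"
  assumes "finite S" "S \<noteq> {}" "S \<subseteq> X"
  shows "sets (unifm S) = sets borel" "prob_space (unifm S)" "emeasure (unifm S) (UNIV - closure X) = 0"
proof -
  show "sets (unifm S) = sets borel" by (simp add: unifm_def)
  show "prob_space (unifm S)" unfolding unifm_def
    by (rule prob_space.prob_space_distr) (auto simp: prob_space_measure_pmf)
  have "emeasure (unifm S) (UNIV - closure X) = emeasure (measure_pmf (pmf_of_set S)) (UNIV - closure X)"
    unfolding unifm_def by (subst emeasure_distr) auto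
  also have "\<dots> = 0" using assms closure_subset[of X] by (subst emeasure_pmf_of_set) auto
  finally show "emeasure (unifm S) (UNIV - closure X) = 0" .
qed

lemma unifm_energy:
  fixes S :: "'a::euclidean_space set"
  assumes "finite S" "S \<noteq> {}"
  shows "(\<integral>\<^sup>+ x. (\<integral>\<^sup>+ y. ennreal (phi_kernel s r (x - y)) \<partial>unifm S) \<partial>unifm S)
     = ennreal ((\<Sum>i\<in>S. \<Sum>j\<in>S. phi_kernel s r (i - j)) / (real (card S))^2)"
proof -
  have inner: "(\<integral>\<^sup>+ y. ennreal (phi_kernel s r (x - y)) \<partial>unifm S) = ennreal ((\<Sum>j\<in>S. phi_kernel s r (x - j)) / real (card S))" for x
  proof -
    have "(\<integral>\<^sup>+ y. ennreal (phi_kernel s r (x - y)) \<partial>unifm S) = (\<integral>\<^sup>+ y. ennreal (phi_kernel s r (x - y)) \<partial>measure_pmf (pmf_of_set S))"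
      unfolding unifm_def using phi_meas2 by (subst nn_integral_distr) auto
    also have "\<dots> = (\<Sum>j\<in>S. ennreal (phi_kernel s r (x - j))) / card S"
      using assms by (subst nn_integral_pmf_of_set) auto
    also have "\<dots> = ennreal ((\<Sum>j\<in>S. phi_kernel s r (x - j)) / real (card S))"
      by (rule ennreal_sum_div) (use assms phi_nonneg in auto)
    finally show ?thesis .
  qed
  have "(\<integral>\<^sup>+ x. (\<integral>\<^sup>+ y. ennreal (phi_kernel s r (x - y)) \<partial>unifm S) \<partial>unifm S)
      = (\<integral>\<^sup>+ x. ennreal ((\<Sum>j\<in>S. phi_kernel s r (x - j)) / real (card S)) \<partial>unifm S)"
    by (simp add: inner)
  also have "\<dots> = (\<integral>\<^sup>+ x. ennreal ((\<Sum>j\<in>S. phi_kernel s r (x - j)) / real (card S)) \<partial>measure_pmf (pmf_of_set S))"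
  proof -
    have m1: "(\<lambda>x. phi_kernel s r (x - j)) \<in> borel_measurable borel" for j :: 'a
      using measurable_compose[OF _ phi_meas, of "\<lambda>x. x - j" borel] by simp
    have "(\<lambda>x. (\<Sum>j\<in>S. phi_kernel s r (x - j)) / real (card S)) \<in> borel_measurable borel"
      using m1 by (intro borel_measurable_divide borel_measurable_sum) auto
    then have "(\<lambda>x. ennreal ((\<Sum>j\<in>S. phi_kernel s r (x - j)) / real (card S))) \<in> borel_measurable borel"
      by (rule measurable_compose[OF _ measurable_ennreal])
    then show ?thesis unfolding unifm_def by (subst nn_integral_distr) auto
  qed
  also have "\<dots> = (\<Sum>i\<in>S. ennreal ((\<Sum>j\<in>S. phi_kernel s r (i - j)) / real (card S))) / card S"
    using assms by (subst nn_integral_pmf_of_set) auto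
  also have "\<dots> = ennreal ((\<Sum>i\<in>S. (\<Sum>j\<in>S. phi_kernel s r (i - j)) / real (card S)) / real (card S))"
    by (rule ennreal_sum_div) (use assms phi_nonneg in \<open>auto intro!: sum_nonneg divide_nonneg_nonneg\<close>)
  also have "\<dots> = ennreal ((\<Sum>i\<in>S. \<Sum>j\<in>S. phi_kernel s r (i - j)) / (real (card S))^2)"
    by (simp add: sum_divide_distrib[symmetric] power2_eq_square)
  finally show ?thesis .
qed



lemma phi_lower_pt:
  fixes X :: "'a::euclidean_space set"
  assumes "bounded X" "r > 0" "s > 0" "x \<in> closure X" "y \<in> closure X"
  shows "min 1 ((r/(diameter X + 1)) powr s) \<le> phi_kernel s r (x - y)"
proof -
  have "dist x y \<le> diameter (closure X)"
    by (rule diameter_bounded_bound) (use assms in auto)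
  then have d: "norm (x - y) \<le> diameter X" using diameter_closure[OF assms(1)] by (simp add: dist_norm)
  show ?thesis
  proof (cases "x = y")
    case True then show ?thesis by (simp add: phi_kernel_def)
  next
    case False
    then have n: "norm (x - y) > 0" by simp
    have dX: "diameter X \<ge> 0" using diameter_ge_0[OF assms(1)] .
    have p: "0 < (diameter X + 1) * norm (x - y)" using dX n by simp
    have "r/(diameter X + 1) \<le> r/norm (x - y)" using d n assms p by (intro divide_left_mono) auto
    moreover have "0 \<le> r/(diameter X + 1)" using dX assms by auto
    ultimately have "(r/(diameter X + 1)) powr s \<le> (r/norm (x - y)) powr s"
      using assms by (intro powr_mono2) auto
    then show ?thesis using False by (simp add: phi_kernel_def)
  qed
qed

lemma energy_inner_lower:
  fixes X :: "'a::euclidean_space set" and \<mu> :: "'a measure"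
  assumes "prob_space \<mu>" "AE y in \<mu>. y \<in> closure X" "bounded X" "r > 0" "s > 0" "x \<in> closure X"
  shows "ennreal (min 1 ((r/(diameter X + 1)) powr s)) \<le> (\<integral>\<^sup>+ y. ennreal (phi_kernel s r (x - y)) \<partial>\<mu>)"
proof -
  let ?c = "min 1 ((r/(diameter X + 1)) powr s)"
  have "AE y in \<mu>. ennreal ?c \<le> ennreal (phi_kernel s r (x - y))"
    using assms(2) by eventually_elim (use phi_lower_pt[OF assms(3,4,5,6)] in \<open>simp add: ennreal_leI\<close>)
  then have "(\<integral>\<^sup>+ y. ennreal ?c \<partial>\<mu>) \<le> (\<integral>\<^sup>+ y. ennreal (phi_kernel s r (x - y)) \<partial>\<mu>)"
    by (rule nn_integral_mono_AE)
  moreover have "(\<integral>\<^sup>+ y. ennreal ?c \<partial>\<mu>) = ennreal ?c" using prob_space.emeasure_space_1[OF assms(1)] by simp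
  ultimately show ?thesis by simp
qed

lemma energy_lower:
  fixes X :: "'a::euclidean_space set" and \<mu> :: "'a measure"
  assumes "sets \<mu> = sets borel" "prob_space \<mu>" "emeasure \<mu> (UNIV - closure X) = 0" "bounded X" "r > 0" "s > 0"
  shows "ennreal (min 1 ((r/(diameter X + 1)) powr s)) \<le> (\<integral>\<^sup>+ x. (\<integral>\<^sup>+ y. ennreal (phi_kernel s r (x - y)) \<partial>\<mu>) \<partial>\<mu>)"
proof -
  let ?c = "min 1 ((r/(diameter X + 1)) powr s)"
  have "UNIV - closure X \<in> sets borel" by (intro borel_open) auto
  then have ns: "UNIV - closure X \<in> null_sets \<mu>" using assms(1,3) by (intro null_setsI) auto
  have ae: "AE x in \<mu>. x \<in> closure X" by (rule AE_I'[OF ns]) auto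
  have "AE x in \<mu>. ennreal ?c \<le> (\<integral>\<^sup>+ y. ennreal (phi_kernel s r (x - y)) \<partial>\<mu>)"
    using ae by eventually_elim (rule energy_inner_lower[OF assms(2) ae assms(4,5,6)])
  then have "(\<integral>\<^sup>+ x. ennreal ?c \<partial>\<mu>) \<le> (\<integral>\<^sup>+ x. (\<integral>\<^sup>+ y. ennreal (phi_kernel s r (x - y)) \<partial>\<mu>) \<partial>\<mu>)"
    by (rule nn_integral_mono_AE)
  moreover have "(\<integral>\<^sup>+ y. ennreal ?c \<partial>\<mu>) = ennreal ?c" using prob_space.emeasure_space_1[OF assms(2)] by simp
  ultimately show ?thesis by simp
qed

lemma min_energy_pos:
  fixes X :: "'a::euclidean_space set"
  assumes "bounded X" "r > 0" "s > 0"
  shows "ennreal (min 1 ((r/(diameter X + 1)) powr s)) \<le> min_energy s r X"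
  unfolding min_energy_def by (rule Inf_greatest) (auto intro: energy_lower[OF _ _ _ assms])

lemma min_energy_le:
  fixes X :: "'a::euclidean_space set"
  assumes "finite S" "S \<noteq> {}" "S \<subseteq> X"
  shows "min_energy s r X \<le> ennreal ((\<Sum>i\<in>S. \<Sum>j\<in>S. phi_kernel s r (i - j)) / (real (card S))^2)"
proof -
  note P = unifm_props[OF assms]
  have "ennreal ((\<Sum>i\<in>S. \<Sum>j\<in>S. phi_kernel s r (i - j)) / (real (card S))^2) \<in>
     {(\<integral>\<^sup>+ x. (\<integral>\<^sup>+ y. ennreal (phi_kernel s r (x - y)) \<partial>\<mu>) \<partial>\<mu>) | \<mu>.
      sets \<mu> = sets borel \<and> prob_space \<mu> \<and> emeasure \<mu> (UNIV - closure X) = 0}"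
    by (rule CollectI, rule exI[of _ "unifm S"]) (simp add: P unifm_energy[OF assms(1,2)])
  then show ?thesis unfolding min_energy_def by (rule Inf_lower)
qed

lemma capacity_ge:
  fixes X :: "'a::euclidean_space set"
  assumes "bounded X" "r > 0" "s > 0" "finite S" "S \<noteq> {}" "S \<subseteq> X"
    and B: "(\<Sum>i\<in>S. \<Sum>j\<in>S. phi_kernel s r (i - j)) \<le> B"
  shows "capacity s r X \<ge> (real (card S))^2 / B"
proof -
  let ?c = "min 1 ((r/(diameter X + 1)) powr s)"
  have dX: "diameter X \<ge> 0" using diameter_ge_0[OF assms(1)] .
  have c0: "?c > 0" using assms dX by simp
  have N: "real (card S) > 0" using assms by (simp add: card_gt_0_iff)
  have lo: "ennreal ?c \<le> min_energy s r X" by (rule min_energy_pos[OF assms(1,2,3)])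
  have "min_energy s r X \<le> ennreal ((\<Sum>i\<in>S. \<Sum>j\<in>S. phi_kernel s r (i - j)) / (real (card S))^2)"
    by (rule min_energy_le[OF assms(4,5,6)])
  also have "\<dots> \<le> ennreal (B / (real (card S))^2)"
    using B N by (intro ennreal_leI divide_right_mono) auto
  finally have hi: "min_energy s r X \<le> ennreal (B / (real (card S))^2)" .
  obtain e where e: "min_energy s r X = ennreal e" "e \<ge> 0"
    using hi by (cases "min_energy s r X") (auto simp: top_unique)
  have ce: "?c \<le> e" using lo e c0 by simp
  moreover have "e \<le> B / (real (card S))^2" using hi e ce c0 by (auto simp: ennreal_le_iff2)
  ultimately have e0: "e > 0" "e \<le> B / (real (card S))^2" using c0 by linarith+
  then have Bp: "B > 0" using N by (smt (verit) divide_nonpos_pos zero_less_power)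
  have "capacity s r X = 1 / e" unfolding capacity_def using e by simp
  also have "1 / e \<ge> 1 / (B / (real (card S))^2)" using e0 Bp N by (intro divide_left_mono) auto
  finally show ?thesis by simp
qed



lemma pow2_powr: "((2::real)^m) powr a = (2 powr a)^m"
  by (simp add: powr_realpow[symmetric] powr_powr powr_power mult.commute)

lemma phi_dyadic:
  fixes z :: "'a::euclidean_space"
  assumes "r > 0" "s > 0" "norm z < 2^K * r"
  shows "phi_kernel s r z \<le> (\<Sum>k\<le>K. 2 powr s * (1 / 2 powr s)^k * (if norm z < 2^k * r then 1 else 0))"
  using assms(3)
proof (induction K)
  case 0
  have "phi_kernel s r z \<le> 1" by (rule phi_le1)
  also have "1 \<le> 2 powr s" using assms(2) by (intro ge_one_powr_ge_zero) auto
  finally show ?case using 0 by simp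
next
  case (Suc K)
  have nn: "0 \<le> 2 powr s * (1 / 2 powr s)^k * (if norm z < 2^k * r then 1 else 0)" for k
    by simp
  show ?case
  proof (cases "norm z < 2^K * r")
    case True
    then have "phi_kernel s r z \<le> (\<Sum>k\<le>K. 2 powr s * (1 / 2 powr s)^k * (if norm z < 2^k * r then 1 else 0))"
      by (rule Suc.IH)
    also have "\<dots> \<le> (\<Sum>k\<le>Suc K. 2 powr s * (1 / 2 powr s)^k * (if norm z < 2^k * r then 1 else 0))"
      using nn by (simp add: add_increasing2)
    finally show ?thesis .
  next
    case False
    then have z: "norm z \<ge> 2^K * r" by simp
    then have zp: "norm z > 0" using assms(1) by (smt (verit) mult_pos_pos zero_less_power)
    then have "z \<noteq> 0" by auto
    then have "phi_kernel s r z \<le> (r / norm z) powr s" by (simp add: phi_kernel_def)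
    also have "\<dots> \<le> (1 / 2^K) powr s"
    proof (rule powr_mono2)
      show "0 \<le> r / norm z" using assms zp by simp
      show "r / norm z \<le> 1 / 2^K" using z zp assms(1) by (simp add: divide_simps mult.commute)
    qed (use assms in auto)
    also have "\<dots> = 2 powr s * (1 / 2 powr s)^(Suc K)"
      using assms by (simp add: powr_divide pow2_powr power_divide field_simps)
    also have "\<dots> = 2 powr s * (1 / 2 powr s)^(Suc K) * (if norm z < 2^(Suc K) * r then 1 else 0)"
      using Suc.prems by simp
    also have "\<dots> \<le> (\<Sum>k\<le>Suc K. 2 powr s * (1 / 2 powr s)^k * (if norm z < 2^k * r then 1 else 0))"
    proof -
      have "0 \<le> (\<Sum>k\<le>K. 2 powr s * (1 / 2 powr s)^k * (if norm z < 2^k * r then 1 else 0))"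
        by (rule sum_nonneg) (rule nn)
      then show ?thesis by simp
    qed
    finally show ?thesis .
  qed
qed

lemma geo_up:
  fixes q Q :: real
  assumes "q > 1" "Q \<ge> 0" "\<And>k. P k \<Longrightarrow> q^k \<le> Q"
  shows "(\<Sum>k\<le>K. if P k then q^k else 0) \<le> q / (q - 1) * min Q (q^K)"
proof (induction K)
  case 0
  have c: "1 \<le> q / (q - 1)" using assms(1) by (simp add: field_simps)
  show ?case
  proof (cases "P 0")
    case True
    then have "1 \<le> Q" using assms(3)[of 0] by simp
    then show ?thesis using True c by simp
  next
    case False
    have "0 \<le> q / (q - 1) * min Q (q^0)" using assms c by simp
    then show ?thesis using False by simp
  qed
next
  case (Suc K)
  have qq: "q / (q - 1) * q^K + q^Suc K = q / (q - 1) * q^Suc K"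
    using assms(1) by (simp add: field_simps)
  have qk: "q^K \<le> q^Suc K" using assms(1) by (intro power_increasing) auto
  have m: "min Q (q^K) \<le> min Q (q^Suc K)" using qk by (auto simp: min_def)
  have c: "q / (q - 1) > 0" using assms(1) by simp
  show ?case
  proof (cases "P (Suc K)")
    case True
    then have "q^Suc K \<le> Q" by (rule assms(3))
    moreover have "(\<Sum>k\<le>K. if P k then q^k else 0) \<le> q / (q - 1) * q^K"
      using Suc.IH c by (smt (verit) min.cobounded2 mult_left_mono)
    ultimately show ?thesis using True qq by (simp add: min_def)
  next
    case False
    then show ?thesis using Suc.IH m c by (smt (verit) mult_left_mono sum.atMost_Suc)
  qed
qed

lemma geo_down:
  fixes t Q :: real
  assumes "0 < t" "t < 1" "Q \<ge> 0" "\<And>k. P k \<Longrightarrow> t^k \<le> Q"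
  shows "(\<Sum>k\<le>K. if P k then t^k else 0) \<le> (if \<exists>k\<le>K. P k then (Q - t^Suc K) / (1 - t) else 0)"
proof (induction K)
  case 0
  show ?case
  proof (cases "P 0")
    case True
    then have "1 \<le> Q" using assms(4)[of 0] by simp
    then have "1 \<le> (Q - t) / (1 - t)" using assms by (simp add: field_simps)
    then show ?thesis using True by auto
  qed auto
next
  case (Suc K)
  have tp: "t^Suc (Suc K) \<le> t^Suc K" using assms by (simp add: power_decreasing)
  have d: "1 - t > 0" using assms by simp
  show ?case
  proof (cases "P (Suc K)")
    case True
    have tq: "t^Suc K \<le> Q" using assms(4)[OF True] .
    have e: "\<exists>k\<le>Suc K. P k" using True by auto
    show ?thesis
    proof (cases "\<exists>k\<le>K. P k")
      case True2: True
      have "(\<Sum>k\<le>K. if P k then t^k else 0) \<le> (Q - t^Suc K) / (1 - t)" using Suc.IH True2 by simp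
      moreover have "(Q - t^Suc K) / (1 - t) + t^Suc K = (Q - t^Suc (Suc K)) / (1 - t)"
        using d by (simp add: field_simps)
      ultimately show ?thesis using True e by simp
    next
      case False
      then have "(\<Sum>k\<le>K. if P k then t^k else 0) = 0" by (intro sum.neutral) auto
      moreover have "t^Suc K \<le> (Q - t^Suc (Suc K)) / (1 - t)"
        using d tq by (simp add: field_simps)
      ultimately show ?thesis using True e by simp
    qed
  next
    case False
    show ?thesis
    proof (cases "\<exists>k\<le>K. P k")
      case True
      have "(Q - t^Suc K) / (1 - t) \<le> (Q - t^Suc (Suc K)) / (1 - t)"
        using d tp by (intro divide_right_mono) auto
      then show ?thesis using Suc.IH True False by (auto simp: le_Suc_eq)
    next
      case F2: False
      then have "\<not> (\<exists>k\<le>Suc K. P k)" using False by (auto simp: le_Suc_eq)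
      then show ?thesis by (auto intro!: sum.neutral)
    qed
  qed
qed

lemma geo_down':
  fixes t Q :: real
  assumes "0 < t" "t < 1" "Q \<ge> 0" "\<And>k. P k \<Longrightarrow> t^k \<le> Q"
  shows "(\<Sum>k\<le>K. if P k then t^k else 0) \<le> Q / (1 - t)"
proof -
  have "(Q - t^Suc K) / (1 - t) \<le> Q / (1 - t)" using assms by (intro divide_right_mono) auto
  moreover have "0 \<le> Q / (1 - t)" using assms by simp
  ultimately show ?thesis using geo_down[where P=P and K=K, OF assms] by (smt (verit))
qed



lemma count_sum:
  "finite S \<Longrightarrow> (\<Sum>j\<in>S. (if P j then 1 else 0::real)) = real (card {j\<in>S. P j})"
  by (simp add: sum.If_cases Int_def conj_commute)

lemma row_bound:
  fixes S :: "'a::euclidean_space set"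
  assumes "finite S" "r > 0" "s > 0" "\<forall>j\<in>S. norm (i - j) < 2^K * r"
  shows "(\<Sum>j\<in>S. phi_kernel s r (i - j)) \<le>
    (\<Sum>k\<le>K. 2 powr s * (1 / 2 powr s)^k * real (card {j\<in>S. dist i j < 2^k * r}))"
proof -
  have "(\<Sum>j\<in>S. phi_kernel s r (i - j)) \<le>
      (\<Sum>j\<in>S. \<Sum>k\<le>K. 2 powr s * (1 / 2 powr s)^k * (if norm (i - j) < 2^k * r then 1 else 0))"
    by (rule sum_mono, rule phi_dyadic) (use assms in auto)
  also have "\<dots> = (\<Sum>k\<le>K. \<Sum>j\<in>S. 2 powr s * (1 / 2 powr s)^k * (if norm (i - j) < 2^k * r then 1 else 0))"
    by (rule sum.swap)
  also have "\<dots> = (\<Sum>k\<le>K. 2 powr s * (1 / 2 powr s)^k * real (card {j\<in>S. dist i j < 2^k * r}))"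
    by (simp add: sum_distrib_left[symmetric] dist_norm count_sum[OF assms(1)])
  finally show ?thesis .
qed

lemma two_pow_ratio:
  fixes r :: real
  assumes "r > 0"
  shows "((2^k * r) / (r/2)) powr a = 2 powr a * (2 powr a)^k"
proof -
  have e: "(2^k * r) / (r/2) = (2::real)^(Suc k)" using assms by simp
  show ?thesis by (metis e pow2_powr power_Suc)
qed

lemma tq_eq: "(1 / 2 powr s)^k * (2 powr a)^k = (2 powr (a - s) :: real)^k"
  by (simp add: power_mult_distrib[symmetric] powr_diff)

lemma kbound:
  fixes X S :: "'a::euclidean_space set"
  assumes X: "bounded X" and s: "s > 0"
    and u: "r < diameter (UNIV::'a set)" and r: "0 < r"
    and S: "finite S" "S \<subseteq> X" "sep (r/2) S" and i: "i \<in> S"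
    and a1: "C1 > 0" and H1: "\<forall>x\<in>X. \<forall>r R. 0 < r \<and> r \<le> R powr (1/\<theta>) \<and> R powr (1/\<theta>) < R \<and> R < 1 \<longrightarrow>
       real (covnum r (ball x R \<inter> X)) \<le> C1 * (R/r) powr \<alpha>1"
    and a2: "C2 > 0" and H2: "\<forall>x\<in>X. \<forall>r R. 0 < r \<and> r < R \<longrightarrow>
       real (covnum r (ball x R \<inter> X)) \<le> C2 * (R/r) powr \<alpha>2"
    and th: "0 < \<theta>" "\<theta> < 1"
  shows "2 powr s * (1/2 powr s)^k * real (card {j\<in>S. dist i j < 2^k * r}) \<le>
      2 powr s * (C1 * 2 powr \<alpha>1 * (if 2^k*r < 1 \<and> r/2 \<le> (2^k*r) powr (1/\<theta>) then (2 powr (\<alpha>1 - s))^k else 0)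
               + C2 * 2 powr \<alpha>2 * (if 2^k*r < 1 \<and> \<not> r/2 \<le> (2^k*r) powr (1/\<theta>) then (2 powr (\<alpha>2 - s))^k else 0)
               + real (card S) * (if \<not> 2^k*r < 1 then (1/2 powr s)^k else 0))"
proof -
  define R where "R = 2^k * r"
  have Rp: "R > 0" using r by (simp add: R_def)
  have "(1::real) \<le> 2^k" by simp
  then have "r \<le> 2^k * r" using mult_right_mono[of 1 "2^k" r] r by simp
  then have rR: "r/2 < R" using r unfolding R_def by linarith
  define T where "T = {j\<in>S. dist i j < R}"
  have iX: "i \<in> X" using i S by auto
  have TE: "T \<subseteq> ball i R \<inter> X" using S by (auto simp: T_def)
  have Tf: "finite T" using S by (simp add: T_def)
  have Ts: "sep (r/2) T" using S(3) by (auto simp: T_def sep_def)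
  have nc: "card T \<le> covnum (r/2) (ball i R \<inter> X)"
    by (rule card_le_covnum[OF _ _ _ TE Tf Ts]) (use X r u in \<open>auto simp: bounded_Int\<close>)
  have w0: "0 \<le> 2 powr s * (1/2 powr s)^k" by simp
  show ?thesis
  proof (cases "R < 1")
    case R1: True
    show ?thesis
    proof (cases "r/2 \<le> R powr (1/\<theta>)")
      case True
      have "R powr (1/\<theta>) < R powr 1" using R1 Rp th by (intro powr_less_mono') (auto simp: field_simps)
      then have "R powr (1/\<theta>) < R" using Rp by simp
      then have "0 < r/2 \<and> r/2 \<le> R powr (1/\<theta>) \<and> R powr (1/\<theta>) < R \<and> R < 1"
        using True R1 r by simp
      then have "real (covnum (r/2) (ball i R \<inter> X)) \<le> C1 * (R/(r/2)) powr \<alpha>1"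
        using H1[rule_format, OF iX] by blast
      also have "\<dots> = C1 * (2 powr \<alpha>1 * (2 powr \<alpha>1)^k)" unfolding R_def using two_pow_ratio[OF r] by simp
      finally have n: "real (card T) \<le> C1 * (2 powr \<alpha>1 * (2 powr \<alpha>1)^k)" using nc by linarith
      have "2 powr s * (1/2 powr s)^k * real (card T) \<le> 2 powr s * (1/2 powr s)^k * (C1 * (2 powr \<alpha>1 * (2 powr \<alpha>1)^k))"
        using n w0 by (rule mult_left_mono)
      also have "\<dots> = 2 powr s * (C1 * 2 powr \<alpha>1 * ((1/2 powr s)^k * (2 powr \<alpha>1)^k))" by (simp add: ac_simps)
      also have "\<dots> = 2 powr s * (C1 * 2 powr \<alpha>1 * (2 powr (\<alpha>1 - s))^k)" by (simp add: tq_eq)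
      finally show ?thesis using True R1 unfolding T_def R_def by simp
    next
      case False
      have "0 < r/2 \<and> r/2 < R" using rR r by simp
      then have "real (covnum (r/2) (ball i R \<inter> X)) \<le> C2 * (R/(r/2)) powr \<alpha>2"
        using H2[rule_format, OF iX] by blast
      also have "\<dots> = C2 * (2 powr \<alpha>2 * (2 powr \<alpha>2)^k)" unfolding R_def using two_pow_ratio[OF r] by simp
      finally have n: "real (card T) \<le> C2 * (2 powr \<alpha>2 * (2 powr \<alpha>2)^k)" using nc by linarith
      have "2 powr s * (1/2 powr s)^k * real (card T) \<le> 2 powr s * (1/2 powr s)^k * (C2 * (2 powr \<alpha>2 * (2 powr \<alpha>2)^k))"
        using n w0 by (rule mult_left_mono)
      also have "\<dots> = 2 powr s * (C2 * 2 powr \<alpha>2 * ((1/2 powr s)^k * (2 powr \<alpha>2)^k))" by (simp add: ac_simps)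
      also have "\<dots> = 2 powr s * (C2 * 2 powr \<alpha>2 * (2 powr (\<alpha>2 - s))^k)" by (simp add: tq_eq)
      finally show ?thesis using False R1 unfolding T_def R_def by simp
    qed
  next
    case False
    have "card T \<le> card S" using S(1) by (intro card_mono) (auto simp: T_def)
    then have "2 powr s * (1/2 powr s)^k * real (card T) \<le> 2 powr s * (1/2 powr s)^k * real (card S)"
      using w0 by (intro mult_left_mono) auto
    then show ?thesis using False unfolding T_def R_def by (simp add: ac_simps)
  qed
qed



lemma geo_cond_c2:
  fixes r s \<alpha> :: real
  assumes "r > 0" "\<alpha> > s" "2^k * r < 1"
  shows "(2 powr (\<alpha> - s))^k \<le> (1/r) powr (\<alpha> - s)"
proof -
  have "(2 powr (\<alpha> - s))^k = ((2::real)^k) powr (\<alpha> - s)" by (simp add: pow2_powr)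
  also have "\<dots> \<le> (1/r) powr (\<alpha> - s)" using assms by (intro powr_mono2) (auto simp: field_simps)
  finally show ?thesis .
qed

lemma geo_cond_c1:
  fixes r s \<alpha> \<theta> :: real
  assumes "r > 0" "\<alpha> > s" "0 < \<theta>" "\<theta> < 1" "\<not> r/2 \<le> (2^k*r) powr (1/\<theta>)"
  shows "(2 powr (\<alpha> - s))^k \<le> r powr ((\<theta> - 1) * (\<alpha> - s))"
proof -
  have Rp: "2^k * r > 0" using assms by simp
  have "(2^k*r) powr (1/\<theta>) < r" using assms by linarith
  then have "((2^k*r) powr (1/\<theta>)) powr \<theta> < r powr \<theta>" by (intro powr_less_mono2) (use assms in auto)
  moreover have "((2^k*r) powr (1/\<theta>)) powr \<theta> = 2^k * r" using Rp assms by (simp add: powr_powr)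
  ultimately have "2^k * r < r powr \<theta>" by simp
  then have "2^k < r powr \<theta> / r" using assms by (simp add: field_simps)
  also have "r powr \<theta> / r = r powr (\<theta> - 1)" using assms by (simp add: powr_diff)
  finally have "(2::real)^k \<le> r powr (\<theta> - 1)" by simp
  then have "((2::real)^k) powr (\<alpha> - s) \<le> (r powr (\<theta> - 1)) powr (\<alpha> - s)" using assms by (intro powr_mono2) auto
  then show ?thesis by (simp add: pow2_powr powr_powr)
qed

lemma geo_cond_c3:
  fixes r s :: real
  assumes "r > 0" "s > 0" "\<not> 2^k * r < 1"
  shows "(1 / 2 powr s)^k \<le> r powr s"
proof -
  have "(1/r) \<le> 2^k" using assms by (simp add: field_simps)
  then have "(1/r) powr s \<le> ((2::real)^k) powr s" using assms by (intro powr_mono2) auto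
  moreover have "((2::real)^k) powr s = (2 powr s)^k" by (rule pow2_powr)
  moreover have "(1/r) powr s = 1 / r powr s" using assms by (simp add: powr_divide)
  ultimately have "1 / r powr s \<le> (2 powr s)^k" by simp
  then have "1 / (2 powr s)^k \<le> r powr s" using assms by (simp add: field_simps)
  then show ?thesis by (simp add: power_one_over)
qed

definition Kc :: "real \<Rightarrow> real \<Rightarrow> real \<Rightarrow> real \<Rightarrow> real \<Rightarrow> real \<Rightarrow> real" where
  "Kc s \<alpha>1 \<alpha>2 C1 C2 nF = 2 powr s * (C1 * 2 powr \<alpha>1 * (2 powr (\<alpha>1 - s) / (2 powr (\<alpha>1 - s) - 1))
     + C2 * 2 powr \<alpha>2 * (2 powr (\<alpha>2 - s) / (2 powr (\<alpha>2 - s) - 1)) + nF * C1 * 2 powr \<alpha>1 / (1 - 1 / 2 powr s))"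

lemma two_powr_gt1: "a > 0 \<Longrightarrow> (2::real) powr a > 1"
  using powr_less_mono[of 0 a 2] by simp

lemma Kc_pos:
  assumes "s > 0" "\<alpha>1 > s" "\<alpha>2 > s" "C1 > 0" "C2 > 0" "nF \<ge> 0"
  shows "Kc s \<alpha>1 \<alpha>2 C1 C2 nF > 0"
proof -
  have "2 powr (\<alpha>1 - s) > 1" "2 powr (\<alpha>2 - s) > 1" "2 powr s > 1" using assms two_powr_gt1 by auto
  then have "1 / 2 powr s < 1" by simp
  then have "0 < 1 - 1 / 2 powr s" by simp
  then have a: "0 \<le> nF * C1 * 2 powr \<alpha>1 / (1 - 1 / 2 powr s)" using assms by (intro divide_nonneg_pos) auto
  have b: "0 < C1 * 2 powr \<alpha>1 * (2 powr (\<alpha>1 - s) / (2 powr (\<alpha>1 - s) - 1))"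
    using assms \<open>2 powr (\<alpha>1 - s) > 1\<close> by simp
  have c: "0 < C2 * 2 powr \<alpha>2 * (2 powr (\<alpha>2 - s) / (2 powr (\<alpha>2 - s) - 1))"
    using assms \<open>2 powr (\<alpha>2 - s) > 1\<close> by simp
  show ?thesis unfolding Kc_def using a b c by simp
qed



lemma main_r:
  fixes X :: "'a::euclidean_space set"
  assumes X: "bounded X" "X \<noteq> {}" and s: "s > 0" and th: "0 < \<theta>" "\<theta> < 1"
    and u: "r < diameter (UNIV::'a set)"
    and r: "0 < r" "r < 1" "r/2 \<le> (3/4) powr (1/\<theta>)"
    and a1: "\<alpha>1 > s" "C1 > 0" and H1: "\<forall>x\<in>X. \<forall>r R. 0 < r \<and> r \<le> R powr (1/\<theta>) \<and> R powr (1/\<theta>) < R \<and> R < 1 \<longrightarrow>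
       real (covnum r (ball x R \<inter> X)) \<le> C1 * (R/r) powr \<alpha>1"
    and a2: "\<alpha>2 > s" "C2 > 0" and H2: "\<forall>x\<in>X. \<forall>r R. 0 < r \<and> r < R \<longrightarrow>
       real (covnum r (ball x R \<inter> X)) \<le> C2 * (R/r) powr \<alpha>2"
    and F: "finite F" "F \<subseteq> X" "\<forall>x\<in>X. \<exists>f\<in>F. dist x f \<le> 1/2"
  shows "capacity s r X \<ge> real (covnum r X) * r powr (max (\<alpha>1 - s) ((\<alpha>2 - s) * (1 - \<theta>))) / Kc s \<alpha>1 \<alpha>2 C1 C2 (card F)"
proof -
  define M where "M = max (\<alpha>1 - s) ((\<alpha>2 - s) * (1 - \<theta>))"
  define t where "t = 1 / 2 powr s"
  define q1 where "q1 = 2 powr (\<alpha>1 - s)"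
  define q2 where "q2 = 2 powr (\<alpha>2 - s)"
  define KK where "KK = Kc s \<alpha>1 \<alpha>2 C1 C2 (card F)"
  have KKp: "KK > 0" unfolding KK_def by (rule Kc_pos) (use s a1 a2 in auto)
  have t: "0 < t" "t < 1" using s two_powr_gt1[of s] by (auto simp: t_def)
  have q1: "q1 > 1" using a1 two_powr_gt1[of "\<alpha>1 - s"] by (simp add: q1_def)
  have q2: "q2 > 1" using a2 two_powr_gt1[of "\<alpha>2 - s"] by (simp add: q2_def)
  obtain S where S: "S \<subseteq> X" "finite S" "sep (r/2) S" "\<And>x. x \<in> X \<Longrightarrow> \<exists>y\<in>S. dist x y \<le> r/2"
      "covnum r X \<le> card S"
    by (rule covnum_le_sep[OF X(1) r(1)]) blast
  have Sne: "S \<noteq> {}" using S(4) X(2) by blast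
  define N where "N = real (card S)"
  have Np: "N > 0" using Sne S(2) by (simp add: N_def card_gt_0_iff)
  have Nb: "N \<le> real (card F) * C1 * (2/r) powr \<alpha>1"
  proof -
    have sub: "S \<subseteq> (\<Union>f\<in>F. {j\<in>S. dist f j < 3/4})"
    proof
      fix j assume j: "j \<in> S"
      then obtain f where f: "f \<in> F" "dist j f \<le> 1/2" using F(3) S(1) by blast
      then have "dist f j < 3/4" by (simp add: dist_commute)
      then show "j \<in> (\<Union>f\<in>F. {j\<in>S. dist f j < 3/4})" using j f(1) by blast
    qed
    have "card S \<le> card (\<Union>f\<in>F. {j\<in>S. dist f j < 3/4})" by (rule card_mono) (use F S sub in auto)
    also have "\<dots> \<le> (\<Sum>f\<in>F. card {j\<in>S. dist f j < 3/4})" by (rule card_UN_le) (use F in auto)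
    finally have "real (card S) \<le> real (\<Sum>f\<in>F. card {j\<in>S. dist f j < 3/4})" by (rule of_nat_mono)
    also have "\<dots> = (\<Sum>f\<in>F. real (card {j\<in>S. dist f j < 3/4}))" by (rule of_nat_sum)
    finally have c: "N \<le> (\<Sum>f\<in>F. real (card {j\<in>S. dist f j < 3/4}))" unfolding N_def .
    have each: "real (card {j\<in>S. dist f j < 3/4}) \<le> C1 * (2/r) powr \<alpha>1" if "f \<in> F" for f
    proof -
      have fX: "f \<in> X" using that F by auto
      have c0: "card {j\<in>S. dist f j < 3/4} \<le> covnum (r/2) (ball f (3/4) \<inter> X)"
        by (rule card_le_covnum) (use X r u S(1,2,3) in \<open>auto simp: bounded_Int sep_def\<close>)
      have "(3/4::real) powr (1/\<theta>) < (3/4) powr 1" using th by (intro powr_less_mono') (auto simp: field_simps)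
      then have "0 < r/2 \<and> r/2 \<le> (3/4) powr (1/\<theta>) \<and> (3/4) powr (1/\<theta>) < 3/4 \<and> (3/4::real) < 1" using r by simp
      then have c1: "real (covnum (r/2) (ball f (3/4) \<inter> X)) \<le> C1 * ((3/4)/(r/2)) powr \<alpha>1"
        using H1[rule_format, OF fX] by blast
      have "((3/4)/(r/2)) powr \<alpha>1 \<le> (2/r) powr \<alpha>1" using r a1 s by (intro powr_mono2) (auto simp: field_simps)
      then have c2: "C1 * ((3/4)/(r/2)) powr \<alpha>1 \<le> C1 * (2/r) powr \<alpha>1" using a1 by (intro mult_left_mono) auto
      have "real (card {j\<in>S. dist f j < 3/4}) \<le> real (covnum (r/2) (ball f (3/4) \<inter> X))" using c0 by (rule of_nat_mono)
      then show ?thesis using c1 c2 by linarith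
    qed
    have "(\<Sum>f\<in>F. real (card {j\<in>S. dist f j < 3/4})) \<le> (\<Sum>f\<in>F. C1 * (2/r) powr \<alpha>1)"
      by (rule sum_mono) (rule each)
    then show ?thesis using c by simp
  qed
  obtain K :: nat where K: "diameter S / r < 2^K" using real_arch_pow[of 2 "diameter S / r"] by auto
  have Kd: "\<forall>j\<in>S. norm (i - j) < 2^K * r" if "i \<in> S" for i
  proof
    fix j assume "j \<in> S"
    then have "dist i j \<le> diameter S" using that S(2) by (intro diameter_bounded_bound) (auto intro: finite_imp_bounded)
    also have "\<dots> < 2^K * r" using K r by (simp add: field_simps)
    finally show "norm (i - j) < 2^K * r" by (simp add: dist_norm)
  qed
  define P2 where "P2 k \<longleftrightarrow> 2^k*r < 1 \<and> r/2 \<le> (2^k*r) powr (1/\<theta>)" for k :: nat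
  define P1 where "P1 k \<longleftrightarrow> 2^k*r < 1 \<and> \<not> r/2 \<le> (2^k*r) powr (1/\<theta>)" for k :: nat
  define P3 where "P3 k \<longleftrightarrow> \<not> 2^k*r < (1::real)" for k :: nat
  define Q1 where "Q1 = (1/r) powr (\<alpha>1 - s)"
  define Q2 where "Q2 = r powr ((\<theta> - 1) * (\<alpha>2 - s))"
  define Q3 where "Q3 = r powr s"
  have g1: "(\<Sum>k\<le>K. if P2 k then q1^k else 0) \<le> q1 / (q1 - 1) * Q1"
  proof -
    have "(\<Sum>k\<le>K. if P2 k then q1^k else 0) \<le> q1 / (q1 - 1) * min Q1 (q1^K)"
      by (rule geo_up[OF q1]) (use r a1 geo_cond_c2 in \<open>auto simp: Q1_def P2_def q1_def\<close>)
    also have "\<dots> \<le> q1 / (q1 - 1) * Q1" using q1 by (intro mult_left_mono) auto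
    finally show ?thesis .
  qed
  have g2: "(\<Sum>k\<le>K. if P1 k then q2^k else 0) \<le> q2 / (q2 - 1) * Q2"
  proof -
    have "(\<Sum>k\<le>K. if P1 k then q2^k else 0) \<le> q2 / (q2 - 1) * min Q2 (q2^K)"
      by (rule geo_up[OF q2]) (use r a2 th geo_cond_c1 in \<open>auto simp: Q2_def P1_def q2_def\<close>)
    also have "\<dots> \<le> q2 / (q2 - 1) * Q2" using q2 by (intro mult_left_mono) auto
    finally show ?thesis .
  qed
  have g3: "(\<Sum>k\<le>K. if P3 k then t^k else 0) \<le> Q3 / (1 - t)"
    by (rule geo_down'[OF t]) (use r s geo_cond_c3 in \<open>auto simp: Q3_def P3_def t_def\<close>)
  define B where "B = 2 powr s * (C1 * 2 powr \<alpha>1 * (q1 / (q1 - 1) * Q1) + C2 * 2 powr \<alpha>2 * (q2 / (q2 - 1) * Q2)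
      + N * (Q3 / (1 - t)))"
  have row: "(\<Sum>j\<in>S. phi_kernel s r (i - j)) \<le> B" if i: "i \<in> S" for i
  proof -
    have "(\<Sum>j\<in>S. phi_kernel s r (i - j)) \<le> (\<Sum>k\<le>K. 2 powr s * t^k * real (card {j\<in>S. dist i j < 2^k * r}))"
      unfolding t_def by (rule row_bound[OF S(2) r(1) s Kd[OF i]])
    also have "\<dots> \<le> (\<Sum>k\<le>K. 2 powr s * (C1 * 2 powr \<alpha>1 * (if P2 k then q1^k else 0)
         + C2 * 2 powr \<alpha>2 * (if P1 k then q2^k else 0) + N * (if P3 k then t^k else 0)))"
      unfolding t_def q1_def q2_def N_def P1_def P2_def P3_def
      by (rule sum_mono, rule kbound[OF X(1) s u r(1) S(2) S(1) S(3) i a1(2) H1 a2(2) H2 th])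
    also have "\<dots> = 2 powr s * (C1 * 2 powr \<alpha>1 * (\<Sum>k\<le>K. if P2 k then q1^k else 0)
         + C2 * 2 powr \<alpha>2 * (\<Sum>k\<le>K. if P1 k then q2^k else 0) + N * (\<Sum>k\<le>K. if P3 k then t^k else 0))"
      by (simp add: sum_distrib_left sum.distrib distrib_left mult.assoc)
    also have "\<dots> \<le> B" unfolding B_def
      using g1 g2 g3 a1 a2 Np
      by (intro mult_left_mono add_mono) auto
    finally show ?thesis .
  qed
  have rM: "r powr x \<le> r powr (- M)" if "- M \<le> x" for x
    using that r by (intro powr_mono') auto
  have Bb: "B \<le> KK * r powr (- M)"
  proof -
    have A: "(1/r) powr (\<alpha>1 - s) = 1 / r powr (\<alpha>1 - s)" using r by (simp add: powr_divide)
    have B: "r powr (- (\<alpha>1 - s)) = 1 / r powr (\<alpha>1 - s)" by (rule powr_minus_divide)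
    have "(1/r) powr (\<alpha>1 - s) = r powr (- (\<alpha>1 - s))" by (simp only: A B)
    moreover have "r powr (- (\<alpha>1 - s)) \<le> r powr (- M)" by (rule rM) (simp add: M_def)
    ultimately have e1: "Q1 \<le> r powr (- M)" unfolding Q1_def by simp
    have e2: "Q2 \<le> r powr (- M)" unfolding Q2_def using rM[of "(\<theta> - 1) * (\<alpha>2 - s)"]
      by (simp add: M_def algebra_simps)
    have "N * Q3 \<le> real (card F) * C1 * (2/r) powr \<alpha>1 * r powr s" unfolding Q3_def
      using Nb by (intro mult_right_mono) auto
    also have "\<dots> = real (card F) * C1 * 2 powr \<alpha>1 * r powr (s - \<alpha>1)"
      using r by (simp add: powr_divide powr_diff)
    also have "\<dots> \<le> real (card F) * C1 * 2 powr \<alpha>1 * r powr (- M)"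
      using rM[of "s - \<alpha>1"] a1 by (intro mult_left_mono) (auto simp: M_def)
    finally have e3: "N * Q3 \<le> real (card F) * C1 * 2 powr \<alpha>1 * r powr (- M)" .
    have c1: "0 \<le> C1 * 2 powr \<alpha>1 * (q1 / (q1 - 1))" using a1 q1 by simp
    have c2: "0 \<le> C2 * 2 powr \<alpha>2 * (q2 / (q2 - 1))" using a2 q2 by simp
    have "B = 2 powr s * (C1 * 2 powr \<alpha>1 * (q1 / (q1 - 1)) * Q1 + C2 * 2 powr \<alpha>2 * (q2 / (q2 - 1)) * Q2
      + N * Q3 / (1 - t))" unfolding B_def by (simp add: ac_simps)
    also have "\<dots> \<le> 2 powr s * (C1 * 2 powr \<alpha>1 * (q1 / (q1 - 1)) * r powr (- M) + C2 * 2 powr \<alpha>2 * (q2 / (q2 - 1)) * r powr (- M)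
      + real (card F) * C1 * 2 powr \<alpha>1 * r powr (- M) / (1 - t))"
      using e1 e2 e3 c1 c2 t by (intro mult_left_mono add_mono divide_right_mono) auto
    also have "\<dots> = KK * r powr (- M)"
      unfolding KK_def Kc_def q1_def q2_def t_def by (simp add: algebra_simps)
    finally show ?thesis .
  qed
  have tot: "(\<Sum>i\<in>S. \<Sum>j\<in>S. phi_kernel s r (i - j)) \<le> N * (KK * r powr (- M))"
  proof -
    have "(\<Sum>i\<in>S. \<Sum>j\<in>S. phi_kernel s r (i - j)) \<le> of_nat (card S) * (KK * r powr (- M))"
      by (rule sum_bounded_above) (use row Bb in force)
    then show ?thesis by (simp add: N_def)
  qed
  have "capacity s r X \<ge> (real (card S))^2 / (N * (KK * r powr (- M)))"
    by (rule capacity_ge[OF X(1) r(1) s S(2) Sne S(1) tot])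
  moreover have "(real (card S))^2 / (N * (KK * r powr (- M))) = N * r powr M / KK"
    using Np KKp r by (simp add: N_def power2_eq_square powr_minus field_simps)
  moreover have "real (covnum r X) * r powr M / KK \<le> N * r powr M / KK"
    using S(5) KKp r by (intro divide_right_mono mult_right_mono) (auto simp: N_def)
  ultimately show ?thesis unfolding M_def KK_def by linarith
qed



lemma ereal_eps_le:
  fixes D P :: ereal
  assumes "\<And>e. e > 0 \<Longrightarrow> D - ereal (m + e) \<le> P"
  shows "D - ereal m \<le> P"
proof (cases D)
  case MInf then show ?thesis by simp
next
  case PInf
  then have "\<infinity> \<le> P" using assms[of 1] by simp
  then show ?thesis by simp
next
  case (real d)
  show ?thesis
  proof (cases P)
    case PInf then show ?thesis by simp
  next
    case MInf
    then show ?thesis using assms[of 1] real by simp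
  next
    case (real p)
    have "d - m \<le> p"
    proof (rule field_le_epsilon)
      fix e :: real assume "e > 0"
      then have "ereal d - ereal (m + e) \<le> ereal p" using assms[of e] \<open>D = ereal d\<close> real by simp
      then show "d - m \<le> p + e" by simp
    qed
    then show ?thesis using \<open>D = ereal d\<close> real by simp
  qed
qed

lemma profile_ge_M:
  fixes X :: "'a::euclidean_space set"
  assumes X: "bounded X" "X \<noteq> {}" and s: "s > 0" and th: "0 < \<theta>" "\<theta> < 1"
    and u: "0 < diameter (UNIV::'a set)"
    and a1: "\<alpha>1 > s" "C1 > 0" and H1: "\<forall>x\<in>X. \<forall>r R. 0 < r \<and> r \<le> R powr (1/\<theta>) \<and> R powr (1/\<theta>) < R \<and> R < 1 \<longrightarrow>
       real (covnum r (ball x R \<inter> X)) \<le> C1 * (R/r) powr \<alpha>1"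
    and a2: "\<alpha>2 > s" "C2 > 0" and H2: "\<forall>x\<in>X. \<forall>r R. 0 < r \<and> r < R \<longrightarrow>
       real (covnum r (ball x R \<inter> X)) \<le> C2 * (R/r) powr \<alpha>2"
  shows "upper_box_dim X - ereal (max (\<alpha>1 - s) ((\<alpha>2 - s) * (1 - \<theta>))) \<le> upper_box_dim_profile s X"
proof -
  define M where "M = max (\<alpha>1 - s) ((\<alpha>2 - s) * (1 - \<theta>))"
  have half: "(1/2::real) > 0" by simp
  obtain F where F: "F \<subseteq> X" "finite F" "sep (1/2) F" "\<And>x. x \<in> X \<Longrightarrow> \<exists>y\<in>F. dist x y \<le> 1/2"
    by (rule max_sep[OF X(1) half]) blast
  define KK where "KK = Kc s \<alpha>1 \<alpha>2 C1 C2 (card F)"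
  have KKp: "KK > 0" unfolding KK_def by (rule Kc_pos) (use s a1 a2 in auto)
  define r0 where "r0 = min (diameter (UNIV::'a set)) (min 1 (2 * (3/4) powr (1/\<theta>)))"
  have r0: "r0 > 0" using u by (simp add: r0_def)
  have capb: "capacity s r X \<ge> real (covnum r X) * r powr M / KK" if "0 < r" "r < r0" for r
    unfolding M_def KK_def
  proof (rule main_r[OF X s th _ _ _ _ a1 H1 a2 H2 F(2) F(1)])
    show "r < diameter (UNIV::'a set)" "0 < r" "r < 1" "r / 2 \<le> (3 / 4) powr (1 / \<theta>)"
      using that by (auto simp: r0_def)
    show "\<forall>x\<in>X. \<exists>f\<in>F. dist x f \<le> 1 / 2" using F(4) by blast
  qed
  have eps: "upper_box_dim X - ereal (M + e) \<le> upper_box_dim_profile s X" if e: "e > 0" for e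
  proof -
    define r1 where "r1 = min r0 (exp (- \<bar>ln KK\<bar> / e))"
    have r1: "r1 > 0" using r0 by (simp add: r1_def)
    have ev: "eventually (\<lambda>r. ereal (ln (real (covnum r X)) / - ln r) + ereal (- (M + e))
          \<le> ereal (ln (capacity s r X) / - ln r)) (at_right 0)"
      unfolding eventually_at_right_field
    proof (intro exI[of _ r1] conjI allI impI)
      show "r1 > 0" by (rule r1)
      fix r :: real assume r: "0 < r" "r < r1"
      have rr0: "r < r0" using r by (simp add: r1_def)
      have r1': "r < 1" using rr0 by (simp add: r0_def)
      have "r < diameter (UNIV::'a set)" using rr0 by (simp add: r0_def)
      have cpos: "covnum r X > 0" by (rule covnum_pos[OF X(1) r(1) X(2)])
      define cv where "cv = real (covnum r X)"
      have cv: "cv \<ge> 1" using cpos by (simp add: cv_def)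
      define L where "L = - ln r"
      have L: "L > 0" using r r1' by (simp add: L_def)
      have lo: "cv * r powr M / KK \<le> capacity s r X" using capb[OF r(1) rr0] by (simp add: cv_def)
      have lp: "cv * r powr M / KK > 0" using cv KKp r by simp
      have "ln (cv * r powr M / KK) \<le> ln (capacity s r X)" using lo lp by simp
      moreover have "ln (cv * r powr M / KK) = ln cv - M * L - ln KK"
        using cv KKp r by (simp add: ln_mult ln_div ln_powr L_def)
      moreover have "ln KK \<le> e * L"
      proof -
        have "r < exp (- \<bar>ln KK\<bar> / e)" using r by (simp add: r1_def)
        then have "ln r < - \<bar>ln KK\<bar> / e" using r by (metis ln_less_cancel_iff exp_gt_zero ln_exp)
        then have "\<bar>ln KK\<bar> / e < L" by (simp add: L_def)
        then have "\<bar>ln KK\<bar> < e * L" using e by (simp add: field_simps)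
        then show ?thesis by linarith
      qed
      ultimately have "ln cv - M * L - e * L \<le> ln (capacity s r X)" by linarith
      then have "(ln cv - M * L - e * L) / L \<le> ln (capacity s r X) / L" using L by (intro divide_right_mono) auto
      moreover have "(ln cv - M * L - e * L) / L = ln cv / L + (- (M + e))" using L by (simp add: field_simps)
      ultimately have "ln cv / L + (- (M + e)) \<le> ln (capacity s r X) / L" by simp
      then show "ereal (ln (real (covnum r X)) / - ln r) + ereal (- (M + e))
          \<le> ereal (ln (capacity s r X) / - ln r)" by (simp add: cv_def L_def)
    qed
    have "Limsup (at_right 0) (\<lambda>r. ereal (ln (real (covnum r X)) / - ln r) + ereal (- (M + e)))
        \<le> upper_box_dim_profile s X" unfolding upper_box_dim_profile_def by (rule Limsup_mono[OF ev])
    moreover have "Limsup (at_right (0::real)) (\<lambda>r. ereal (ln (real (covnum r X)) / - ln r) + ereal (- (M + e)))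
        = upper_box_dim X + ereal (- (M + e))"
      unfolding upper_box_dim_def by (rule Limsup_add_ereal_right) auto
    moreover have "upper_box_dim X + ereal (- (M + e)) = upper_box_dim X - ereal (M + e)"
      by (simp add: minus_ereal_def)
    ultimately show ?thesis by simp
  qed
  show ?thesis unfolding M_def[symmetric] by (rule ereal_eps_le) (rule eps)
qed



lemma H1_mono:
  assumes H: "\<forall>x\<in>X. \<forall>r R. 0 < r \<and> r \<le> R powr (1/\<theta>) \<and> R powr (1/\<theta>) < R \<and> R < 1 \<longrightarrow>
       real (covnum r (ball x R \<inter> X)) \<le> C * (R/r) powr \<alpha>"
    and "\<alpha> \<le> \<beta>" "C > 0"
  shows "\<forall>x\<in>X. \<forall>r R. 0 < r \<and> r \<le> R powr (1/\<theta>) \<and> R powr (1/\<theta>) < R \<and> R < 1 \<longrightarrow>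
       real (covnum r (ball x (R::real) \<inter> X)) \<le> C * (R/r) powr \<beta>"
proof (intro ballI allI impI)
  fix x r R assume x: "x \<in> X" and c: "0 < r \<and> r \<le> R powr (1/\<theta>) \<and> R powr (1/\<theta>) < R \<and> R < 1"
  then have "1 \<le> R / r" by simp
  then have "(R/r) powr \<alpha> \<le> (R/r) powr \<beta>" using assms(2) by (intro powr_mono) auto
  then have "C * (R/r) powr \<alpha> \<le> C * (R/r) powr \<beta>" using assms(3) by simp
  moreover have "real (covnum r (ball x R \<inter> X)) \<le> C * (R/r) powr \<alpha>" using H x c by blast
  ultimately show "real (covnum r (ball x R \<inter> X)) \<le> C * (R/r) powr \<beta>" by linarith
qed

lemma H2_mono:
  assumes H: "\<forall>x\<in>X. \<forall>r R. 0 < r \<and> r < R \<longrightarrow>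
       real (covnum r (ball x R \<inter> X)) \<le> C * ((R::real)/r) powr \<alpha>"
    and "\<alpha> \<le> \<beta>" "C > 0"
  shows "\<forall>x\<in>X. \<forall>r R. 0 < r \<and> r < R \<longrightarrow>
       real (covnum r (ball x (R::real) \<inter> X)) \<le> C * (R/r) powr \<beta>"
proof (intro ballI allI impI)
  fix x r and R :: real assume x: "x \<in> X" and c: "0 < r \<and> r < R"
  then have "1 \<le> R / r" by simp
  then have "(R/r) powr \<alpha> \<le> (R/r) powr \<beta>" using assms(2) by (intro powr_mono) auto
  then have "C * (R/r) powr \<alpha> \<le> C * (R/r) powr \<beta>" using assms(3) by simp
  moreover have "real (covnum r (ball x R \<inter> X)) \<le> C * (R/r) powr \<alpha>" using H x c by blast
  ultimately show "real (covnum r (ball x R \<inter> X)) \<le> C * (R/r) powr \<beta>" by linarith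
qed

lemma ereal_minus_le_mono: "x \<le> y \<Longrightarrow> (D::ereal) - ereal y \<le> D - ereal x"
  by (cases D) auto

lemma ereal_fin:
  assumes "0 \<le> x" "x \<le> ereal n"
  obtains a where "x = ereal a" "a \<ge> 0"
  using assms by (cases x) auto

theorem theorem4p3:
  fixes X :: "(real ^ 'n) set" and s \<theta> :: real
  assumes "0 < s" "s \<le> real CARD('n)" "0 < \<theta>" "\<theta> < 1"
    and "bounded X" "X \<noteq> {}"
  shows "upper_box_dim_profile s X \<ge> upper_box_dim X -
           max 0 (max (upper_assouad_spectrum \<theta> X - ereal s)
                      ((assouad_dim X - ereal s) * ereal (1 - \<theta>)))"
proof -
  note s = assms(1) and th = assms(3,4) and X = assms(5,6)
  obtain a where a: "upper_assouad_spectrum \<theta> X = ereal a" "a \<ge> 0"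
    using spec_fin[of \<theta> X] by (cases "upper_assouad_spectrum \<theta> X") auto
  obtain b where b: "assouad_dim X = ereal b" "b \<ge> 0"
    using assouad_fin[of X] by (cases "assouad_dim X") auto
  define m where "m = max 0 (max (a - s) ((b - s) * (1 - \<theta>)))"
  have rhs: "max 0 (max (upper_assouad_spectrum \<theta> X - ereal s) ((assouad_dim X - ereal s) * ereal (1 - \<theta>)))
      = ereal m" unfolding a b m_def by (simp add: max_def)
  have "upper_box_dim X - ereal m \<le> upper_box_dim_profile s X"
  proof (cases "diameter (UNIV :: (real^'n) set) \<le> 0")
    case True
    have D: "upper_box_dim X \<le> 0" unfolding upper_box_dim_def
    proof (rule Limsup_bounded)
      show "\<forall>\<^sub>F r in at_right 0. ereal (ln (real (covnum r X)) / - ln r) \<le> 0"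
        unfolding eventually_at_right_field
      proof (intro exI[of _ 1] conjI allI impI)
        fix r :: real assume r: "0 < r" "r < 1"
        have "covnum r X \<le> card {UNIV :: (real^'n) set}"
          by (rule covnum_le) (use True r in auto)
        then have c: "real (covnum r X) \<le> 1" by simp
        have "ln (real (covnum r X)) \<le> 0"
          using c by (cases "covnum r X = 0") auto
        moreover have "- ln r > 0" using r by simp
        ultimately show "ereal (ln (real (covnum r X)) / - ln r) \<le> 0"
          by (simp add: divide_nonpos_pos divide_nonpos_neg)
      qed simp
    qed
    have P: "0 \<le> upper_box_dim_profile s X" unfolding upper_box_dim_profile_def
    proof (rule le_Limsup)
      show "at_right (0::real) \<noteq> bot" by simp
      obtain x0 where x0: "x0 \<in> X" using X(2) by blast
      show "\<forall>\<^sub>F r in at_right 0. 0 \<le> ereal (ln (capacity s r X) / - ln r)"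
        unfolding eventually_at_right_field
      proof (intro exI[of _ 1] conjI allI impI)
        fix r :: real assume r: "0 < r" "r < 1"
        have hS: "(\<Sum>i\<in>{x0}. \<Sum>j\<in>{x0}. phi_kernel s r (i - j)) \<le> 1" by (simp add: phi_kernel_def)
        have "capacity s r X \<ge> (real (card {x0}))^2 / 1"
          by (rule capacity_ge[OF X(1) r(1) s _ _ _ hS]) (use x0 in auto)
        then have "capacity s r X \<ge> 1" by simp
        then have "ln (capacity s r X) \<ge> 0" by simp
        moreover have "- ln r > 0" using r by simp
        ultimately show "0 \<le> ereal (ln (capacity s r X) / - ln r)" by (simp add: divide_nonneg_neg)
      qed simp
    qed
    have "upper_box_dim X - ereal m \<le> 0"
    proof -
      have mnn: "m \<ge> 0" by (simp add: m_def)
      show ?thesis using D mnn by (cases "upper_box_dim X") auto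
    qed
    then show ?thesis using P by (rule order.trans)
  next
    case False
    then have u: "0 < diameter (UNIV :: (real^'n) set)" by simp
    show ?thesis
    proof (rule ereal_eps_le)
      fix e :: real assume e: "e > 0"
      have "upper_assouad_spectrum \<theta> X < ereal (a + e)" using a e by simp
      then obtain \<alpha>1 where A1: "\<alpha>1 \<in> {\<alpha>. \<alpha> > 0 \<and> (\<exists>C>0. \<forall>x\<in>X. \<forall>r R.
          0 < r \<and> r \<le> R powr (1 / \<theta>) \<and> R powr (1 / \<theta>) < R \<and> R < 1 \<longrightarrow>
          real (covnum r (ball x R \<inter> X)) \<le> C * (R / r) powr \<alpha>)}" "ereal \<alpha>1 < ereal (a + e)"
        unfolding upper_assouad_spectrum_def by (auto simp: Inf_less_iff)
      then obtain C1 where C1: "C1 > 0" and H1: "\<forall>x\<in>X. \<forall>r R.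
          0 < r \<and> r \<le> R powr (1 / \<theta>) \<and> R powr (1 / \<theta>) < R \<and> R < 1 \<longrightarrow>
          real (covnum r (ball x R \<inter> X)) \<le> C1 * (R / r) powr \<alpha>1" by blast
      have "assouad_dim X < ereal (b + e)" using b e by simp
      then obtain \<alpha>2 where A2: "\<alpha>2 \<in> {\<alpha>. \<alpha> > 0 \<and> (\<exists>C>0. \<forall>x\<in>X. \<forall>r R. 0 < r \<and> r < R \<longrightarrow>
          real (covnum r (ball x R \<inter> X)) \<le> C * (R / r) powr \<alpha>)}" "ereal \<alpha>2 < ereal (b + e)"
        unfolding assouad_dim_def by (auto simp: Inf_less_iff)
      then obtain C2 where C2: "C2 > 0" and H2: "\<forall>x\<in>X. \<forall>r R. 0 < r \<and> r < R \<longrightarrow>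
          real (covnum r (ball x R \<inter> X)) \<le> C2 * (R / r) powr \<alpha>2" by blast
      define \<beta>1 where "\<beta>1 = max \<alpha>1 (s + e)"
      define \<beta>2 where "\<beta>2 = max \<alpha>2 (s + e)"
      have H1': "\<forall>x\<in>X. \<forall>r R. 0 < r \<and> r \<le> R powr (1 / \<theta>) \<and> R powr (1 / \<theta>) < R \<and> R < 1 \<longrightarrow>
          real (covnum r (ball x R \<inter> X)) \<le> C1 * (R / r) powr \<beta>1"
        by (rule H1_mono[OF H1 _ C1]) (simp add: \<beta>1_def)
      have H2': "\<forall>x\<in>X. \<forall>r R. 0 < r \<and> r < R \<longrightarrow>
          real (covnum r (ball x R \<inter> X)) \<le> C2 * (R / r) powr \<beta>2"
        by (rule H2_mono[OF H2 _ C2]) (simp add: \<beta>2_def)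
      have b1: "\<beta>1 > s" "\<beta>2 > s" using e by (auto simp: \<beta>1_def \<beta>2_def)
      have main: "upper_box_dim X - ereal (max (\<beta>1 - s) ((\<beta>2 - s) * (1 - \<theta>))) \<le> upper_box_dim_profile s X"
        by (rule profile_ge_M[OF X s th u b1(1) C1 H1' b1(2) C2 H2'])
      have l1: "\<alpha>1 < a + e" "\<alpha>2 < b + e" using A1(2) A2(2) by auto
      have m1: "\<beta>1 - s \<le> m + e" using l1 e by (auto simp: \<beta>1_def m_def)
      have "(\<beta>2 - s) * (1 - \<theta>) \<le> (max 0 (b - s) + e) * (1 - \<theta>)"
        using l1 e th by (intro mult_right_mono) (auto simp: \<beta>2_def)
      also have "\<dots> \<le> max 0 ((b - s) * (1 - \<theta>)) + e"
      proof -
        have x1: "(max 0 (b - s) + e) * (1 - \<theta>) = max 0 (b - s) * (1 - \<theta>) + e * (1 - \<theta>)"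
          by (simp add: algebra_simps)
        have x2: "max 0 (b - s) * (1 - \<theta>) = max 0 ((b - s) * (1 - \<theta>))"
        proof (cases "b \<le> s")
          case True
          then have "(b - s) * (1 - \<theta>) \<le> 0" using th by (simp add: mult_nonpos_nonneg)
          then show ?thesis using True by simp
        next
          case False
          then have "(b - s) * (1 - \<theta>) \<ge> 0" using th by simp
          then show ?thesis using False by simp
        qed
        have x3: "e * (1 - \<theta>) \<le> e" using e th by (simp add: mult_left_le)
        show ?thesis using x1 x2 x3 by linarith
      qed
      also have "\<dots> \<le> m + e" by (auto simp: m_def)
      finally have m2: "(\<beta>2 - s) * (1 - \<theta>) \<le> m + e" .
      have "max (\<beta>1 - s) ((\<beta>2 - s) * (1 - \<theta>)) \<le> m + e" using m1 m2 by simp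
      then have "upper_box_dim X - ereal (m + e) \<le> upper_box_dim X - ereal (max (\<beta>1 - s) ((\<beta>2 - s) * (1 - \<theta>)))"
        by (rule ereal_minus_le_mono)
      then show "upper_box_dim X - ereal (m + e) \<le> upper_box_dim_profile s X"
        using main by (rule order.trans)
    qed
  qed
  then show ?thesis unfolding rhs .
qed

end
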